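(* Let $G$ be a locally compact second countable group and $d\in\mathbb{N}$, and consider $\mathbb{R}$ as the trivial $G$-module. Under the map $\xi\mapsto\bar\xi$, $\bar\xi(g)=\xi(1,g)$, the image $d^0(C(G,\mathbb{R})^{G(d)})\subseteq C(G^2,\mathbb{R})$ maps bijectively onto the space of continuous polynomial maps $G\to\mathbb{R}$ of degree at most $d-1$ vanishing at the identity. Consequently $H^1_{(d)}(G,\mathbb{R})\cong\mathrm{Pol}_d(G)/\mathrm{Pol}_{d-1}(G)$. Further, the natural $G$-action on $H^1_{(d)}(G,\mathbb{R})$ is trivial.
   Context: $G$ acts on $C(G^{n+1},\mathbb{R})$ by $(g.f)(g_0,\dots,g_n)=f(g^{-1}g_0,\dots,g^{-1}g_n)$; $d^0f(g_0,g_1)=f(g_1)-f(g_0)$ and $d^n$ is the homogeneous bar differential. For a $G$-module $\mathcal{F}$, $\partial_g\xi=g.\xi-\xi$ and $\mathcal{F}^{G(d)}=\{\xi:\partial_{g_1}\cdots\partial_{g_d}\xi=0\ \forall g_i\}$. Polynomial cohomology: $H^n_{(d)}(G,\mathcal{E})=\ker(d^n|_{C(G^{n+1},\mathcal{E})^{G(d)}})/d^{n-1}(C(G^{n},\mathcal{E})^{G(d)})$. $\mathrm{Pol}_d(G)=C(G,\mathbb{R})^{G(d+1)}$, the continuous polynomial maps of degree at most $d$, where for functions $(\partial_g\xi)(h)=\xi(g^{-1}h)-\xi(h)$. *)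

theory Defs
  imports "HOL-Analysis.Analysis"
begin

text \<open>The group G is a type of class group_add (written additively, not assumed
commutative): the identity 1 is 0, products g h are g + h, inverses are -g.\<close>

definition topological_group :: "'g::{topological_space, group_add} itself \<Rightarrow> bool" where
  "topological_group _ \<longleftrightarrow>
     continuous_on UNIV (\<lambda>p::'g \<times> 'g. fst p + snd p) \<and> continuous_on UNIV (uminus :: 'g \<Rightarrow> 'g)"

definition act1 :: "'g::group_add \<Rightarrow> ('g \<Rightarrow> real) \<Rightarrow> ('g \<Rightarrow> real)" where
  "act1 g f = (\<lambda>h. f (- g + h))"

definition act2 :: "'g::group_add \<Rightarrow> ('g \<times> 'g \<Rightarrow> real) \<Rightarrow> ('g \<times> 'g \<Rightarrow> real)" where
  "act2 g f = (\<lambda>(g0, g1). f (- g + g0, - g + g1))"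

fun iter_diff :: "('g \<Rightarrow> ('a \<Rightarrow> real) \<Rightarrow> ('a \<Rightarrow> real)) \<Rightarrow> 'g list \<Rightarrow> ('a \<Rightarrow> real) \<Rightarrow> ('a \<Rightarrow> real)" where
  "iter_diff act [] \<xi> = \<xi>"
| "iter_diff act (g # gs) \<xi> = act g (iter_diff act gs \<xi>) - iter_diff act gs \<xi>"

definition poly_part :: "('g \<Rightarrow> ('a \<Rightarrow> real) \<Rightarrow> ('a \<Rightarrow> real)) \<Rightarrow> nat \<Rightarrow> ('a \<Rightarrow> real) set \<Rightarrow> ('a \<Rightarrow> real) set" where
  "poly_part act d F = {\<xi> \<in> F. \<forall>gs. length gs = d \<longrightarrow> iter_diff act gs \<xi> = (\<lambda>_. 0)}"

definition C1 :: "('g::topological_space \<Rightarrow> real) set" where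
  "C1 = {f. continuous_on UNIV f}"

definition C2 :: "('g::topological_space \<times> 'g \<Rightarrow> real) set" where
  "C2 = {f. continuous_on UNIV f}"

definition d0 :: "('g \<Rightarrow> real) \<Rightarrow> ('g \<times> 'g \<Rightarrow> real)" where
  "d0 f = (\<lambda>(g0, g1). f g1 - f g0)"

definition d1 :: "('g \<times> 'g \<Rightarrow> real) \<Rightarrow> ('g \<times> 'g \<times> 'g \<Rightarrow> real)" where
  "d1 f = (\<lambda>(g0, g1, g2). f (g1, g2) - f (g0, g2) + f (g0, g1))"

definition Pol :: "nat \<Rightarrow> ('g::{topological_space, group_add} \<Rightarrow> real) set" where
  "Pol d = poly_part act1 (Suc d) C1"

definition Z1 :: "nat \<Rightarrow> ('g::{topological_space, group_add} \<times> 'g \<Rightarrow> real) set" where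
  "Z1 d = {f \<in> poly_part act2 d C2. d1 f = (\<lambda>_. 0)}"

definition B1 :: "nat \<Rightarrow> ('g::{topological_space, group_add} \<times> 'g \<Rightarrow> real) set" where
  "B1 d = d0 ` poly_part act1 d C1"

text \<open>Isomorphism of quotient real vector spaces Z/B \<cong> P/Q (B \<subseteq> Z, Q \<subseteq> P
  linear subspaces of function spaces), expressed without quotient types:
  a linear map phi : Z -> P which induces a bijection Z/B -> P/Q, i.e. it is
  surjective modulo Q and phi z \<in> Q iff z \<in> B.\<close>

definition quotient_iso :: "('a \<Rightarrow> real) set \<Rightarrow> ('a \<Rightarrow> real) set \<Rightarrow> ('b \<Rightarrow> real) set \<Rightarrow> ('b \<Rightarrow> real) set \<Rightarrow> bool" where
  "quotient_iso Z B P Q \<longleftrightarrow>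
     (\<exists>\<phi>. (\<forall>z\<in>Z. \<phi> z \<in> P)
        \<and> (\<forall>z\<in>Z. \<forall>z'\<in>Z. \<forall>a b::real. \<phi> (\<lambda>x. a * z x + b * z' x) = (\<lambda>y. a * \<phi> z y + b * \<phi> z' y))
        \<and> (\<forall>p\<in>P. \<exists>z\<in>Z. p - \<phi> z \<in> Q)
        \<and> (\<forall>z\<in>Z. \<phi> z \<in> Q \<longleftrightarrow> z \<in> B))"

end

theory Submission
  imports Defs
begin

lemma iter_diff_minus_const:
  "iter_diff act1 gs (\<lambda>x. f x - c) = (if gs = [] then (\<lambda>x. f x - c) else iter_diff act1 gs f)"
  by (induction gs) (auto simp: act1_def fun_eq_iff)

lemma iter_diff_const:
  "iter_diff act1 gs (\<lambda>_. c) = (if gs = [] then (\<lambda>_. c) else (\<lambda>_. 0))"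
  by (induction gs) (auto simp: act1_def fun_eq_iff)

lemma iter_diff_snoc:
  "iter_diff act (gs @ [g]) \<xi> = iter_diff act gs (act g \<xi> - \<xi>)"
  by (induction gs) auto

lemma act2_d0: "act2 g (d0 \<phi>) = d0 (act1 g \<phi>)"
  by (simp add: act2_def d0_def act1_def fun_eq_iff)

lemma d0_diff: "d0 (a - b) = d0 a - d0 b"
  by (simp add: d0_def fun_eq_iff)

lemma iter_d0: "iter_diff act2 gs (d0 \<phi>) = d0 (iter_diff act1 gs \<phi>)"
proof (induction gs)
  case (Cons g gs) then show ?case by (metis iter_diff.simps(2) act2_d0 d0_diff)
qed simp

lemma d0_zero_iff: "d0 \<phi> = (\<lambda>_. 0) \<longleftrightarrow> (\<exists>c. \<phi> = (\<lambda>_. c))"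
proof
  assume h: "d0 \<phi> = (\<lambda>_. 0)"
  have "\<phi> x = \<phi> y" for x y using fun_cong[OF h, of "(x,y)"] by (simp add: d0_def)
  then show "\<exists>c. \<phi> = (\<lambda>_. c)" by blast
qed (auto simp: d0_def fun_eq_iff)

lemma C1_const: "(\<lambda>_. c) \<in> C1"
  by (simp add: C1_def)

lemma C1_minus_const: "f \<in> C1 \<Longrightarrow> (\<lambda>x. f x - c) \<in> C1"
  by (simp add: C1_def continuous_on_diff)

lemma C1_diff: "f \<in> C1 \<Longrightarrow> h \<in> C1 \<Longrightarrow> f - h \<in> C1"
  unfolding C1_def fun_diff_def by (simp add: continuous_on_diff)

lemma C2_d0: "\<psi> \<in> C1 \<Longrightarrow> d0 \<psi> \<in> C2"
proof -
  assume "\<psi> \<in> C1"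
  hence c: "continuous_on UNIV \<psi>" by (simp add: C1_def)
  have "continuous_on UNIV (\<lambda>p. \<psi> (snd p) - \<psi> (fst p))"
    by (intro continuous_on_diff continuous_on_compose2[OF c] continuous_on_fst continuous_on_snd continuous_on_id) auto
  moreover have "d0 \<psi> = (\<lambda>p. \<psi> (snd p) - \<psi> (fst p))" by (simp add: d0_def fun_eq_iff split: prod.split)
  ultimately show ?thesis by (simp add: C2_def)
qed

lemma C1_slice: "f \<in> C2 \<Longrightarrow> (\<lambda>g. f (0, g)) \<in> C1"
proof -
  assume "f \<in> C2"
  hence c: "continuous_on UNIV f" by (simp add: C2_def)
  show ?thesis unfolding C1_def
    by (auto intro!: continuous_on_compose2[OF c] continuous_on_Pair continuous_on_const continuous_on_id)
qed

lemma Pol_char: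
  "\<psi> \<in> Pol d \<longleftrightarrow> \<psi> \<in> C1 \<and> (\<forall>gs. length gs = d \<longrightarrow> (\<exists>c. iter_diff act1 gs \<psi> = (\<lambda>_. c)))"
proof
  assume h: "\<psi> \<in> Pol d"
  show "\<psi> \<in> C1 \<and> (\<forall>gs. length gs = d \<longrightarrow> (\<exists>c. iter_diff act1 gs \<psi> = (\<lambda>_. c)))"
  proof (intro conjI allI impI)
    show "\<psi> \<in> C1" using h by (simp add: Pol_def poly_part_def)
    fix gs :: "'a list" assume l: "length gs = d"
    let ?X = "iter_diff act1 gs \<psi>"
    have "?X x = ?X 0" for x
    proof -
      have A: "\<forall>gs. length gs = Suc d \<longrightarrow> iter_diff act1 gs \<psi> = (\<lambda>_. 0)" using h by (simp add: Pol_def poly_part_def)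
      have "iter_diff act1 (x # gs) \<psi> = (\<lambda>_. 0)" by (metis A l length_Cons)
      from fun_cong[OF this, of x] show ?thesis by (simp add: act1_def)
    qed
    then show "\<exists>c. ?X = (\<lambda>_. c)" by blast
  qed
next
  assume h: "\<psi> \<in> C1 \<and> (\<forall>gs. length gs = d \<longrightarrow> (\<exists>c. iter_diff act1 gs \<psi> = (\<lambda>_. c)))"
  show "\<psi> \<in> Pol d" unfolding Pol_def poly_part_def
  proof (intro CollectI conjI allI impI)
    show "\<psi> \<in> C1" using h by simp
    fix gs :: "'a list" assume "length gs = Suc d"
    then obtain g gs' where gs: "gs = g # gs'" "length gs' = d" by (cases gs) auto
    then obtain c where "iter_diff act1 gs' \<psi> = (\<lambda>_. c)" using h by blast
    then show "iter_diff act1 gs \<psi> = (\<lambda>_. 0)" using gs by (simp add: act1_def fun_eq_iff)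
  qed
qed

lemma Pol_const: "(\<lambda>_. c) \<in> Pol n"
  by (auto simp: Pol_def poly_part_def iter_diff_const C1_const)

lemma Pol_minus_const: "f \<in> Pol n \<Longrightarrow> (\<lambda>x. f x - c) \<in> Pol n"
  by (auto simp: Pol_def poly_part_def iter_diff_minus_const C1_minus_const)

lemma Z1_d0: "f \<in> Z1 d \<Longrightarrow> f = d0 (\<lambda>g. f (0, g))"
proof -
  assume "f \<in> Z1 d"
  hence h: "d1 f = (\<lambda>_. 0)" by (simp add: Z1_def)
  have H: "f (a, b) = f (0, b) - f (0, a)" for a b
    using fun_cong[OF h, of "(0, a, b)"] by (simp add: d1_def)
  have "f p = d0 (\<lambda>g. f (0, g)) p" for p
  proof -
    obtain a b where p: "p = (a, b)" by (cases p)
    have "d0 (\<lambda>g. f (0, g)) p = f (0, b) - f (0, a)" unfolding p d0_def by simp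
    then show ?thesis using H[of a b] p by simp
  qed
  then show ?thesis by (rule ext)
qed

lemma Z1_Pol: "f \<in> Z1 d \<Longrightarrow> (\<lambda>g. f (0, g)) \<in> Pol d"
proof -
  assume z: "f \<in> Z1 d"
  let ?\<psi> = "\<lambda>g. f (0, g)"
  have e: "f = d0 ?\<psi>" using Z1_d0[OF z] .
  show ?thesis unfolding Pol_char
  proof (intro conjI allI impI)
    show "?\<psi> \<in> C1" using z unfolding Z1_def poly_part_def by (blast intro: C1_slice)
    fix gs :: "'a list" assume "length gs = d"
    hence "iter_diff act2 gs f = (\<lambda>_. 0)" using z unfolding Z1_def poly_part_def by blast
    moreover have "iter_diff act2 gs f = iter_diff act2 gs (d0 ?\<psi>)" using arg_cong[OF e, of "iter_diff act2 gs"] .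
    ultimately have "d0 (iter_diff act1 gs ?\<psi>) = (\<lambda>_. 0)" by (simp only: iter_d0)
    then show "\<exists>c. iter_diff act1 gs ?\<psi> = (\<lambda>_. c)" using d0_zero_iff by blast
  qed
qed

lemma d1d0: "d1 (d0 (\<psi>::'a\<Rightarrow>real)) x = 0"
  by (cases x rule: prod_cases3) (simp add: d1_def d0_def)

lemma Pol_Z1: "\<psi> \<in> Pol d \<Longrightarrow> d0 \<psi> \<in> Z1 d"
proof -
  assume p: "\<psi> \<in> Pol d"
  have c1: "\<psi> \<in> C1" using p by (simp add: Pol_def poly_part_def)
  have D: "d1 (d0 \<psi>) = (\<lambda>_. 0)" by (rule ext) (rule d1d0)
  have C: "d0 \<psi> \<in> C2" using c1 by (rule C2_d0)
  have P: "\<forall>gs. length gs = d \<longrightarrow> (\<exists>c. iter_diff act1 gs \<psi> = (\<lambda>_. c))" using p unfolding Pol_char by (elim conjE)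
  have I: "iter_diff act2 gs (d0 \<psi>) = (\<lambda>_. 0)" if "length gs = d" for gs
  proof -
    have "\<exists>c. iter_diff act1 gs \<psi> = (\<lambda>_. c)" using P that by simp
    then obtain c where e: "iter_diff act1 gs \<psi> = (\<lambda>_. c)" ..
    have "iter_diff act2 gs (d0 \<psi>) = d0 (\<lambda>_. c)" unfolding iter_d0 e ..
    also have "\<dots> = (\<lambda>_. 0)" by (simp add: d0_def fun_eq_iff split: prod.splits)
    finally show ?thesis .
  qed
  show ?thesis unfolding Z1_def poly_part_def using D C I by simp
qed

lemma Pol_pred: "d \<ge> 1 \<Longrightarrow> Pol (d - 1) = poly_part act1 d C1"
  by (simp add: Pol_def)

theorem proposition7p5:
  fixes d :: nat
  assumes "topological_group TYPE('g::{t2_space, second_countable_topology, group_add})"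
    and "locally_compact_space (euclidean :: 'g topology)"
    and "d \<ge> 1"
  shows "bij_betw (\<lambda>\<xi> g. \<xi> (0, g)) (B1 d :: ('g \<times> 'g \<Rightarrow> real) set) {p \<in> Pol (d - 1). p 0 = 0}
       \<and> quotient_iso (Z1 d :: ('g \<times> 'g \<Rightarrow> real) set) (B1 d) (Pol d :: ('g \<Rightarrow> real) set) (Pol (d - 1))
       \<and> (\<forall>g::'g. \<forall>f \<in> Z1 d. act2 g f - f \<in> B1 d)"
proof (intro conjI)
  have PP: "Pol (d - 1) = poly_part act1 d C1" using assms(3) by (rule Pol_pred)
  have B1E: "\<exists>f. z = d0 f \<and> f \<in> Pol (d - 1)" if "z \<in> B1 d" for z :: "'g \<times> 'g \<Rightarrow> real"
  proof -
    from that obtain f where "z = d0 f" "f \<in> poly_part act1 d C1" unfolding B1_def by (rule imageE)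
    then show ?thesis unfolding PP by (intro exI conjI)
  qed
  have B1I: "d0 f \<in> B1 d" if "f \<in> Pol (d - 1)" for f :: "'g \<Rightarrow> real"
    using that unfolding B1_def PP by (rule imageI)
  show "bij_betw (\<lambda>\<xi> g. \<xi> (0, g)) (B1 d :: ('g \<times> 'g \<Rightarrow> real) set) {p \<in> Pol (d - 1). p 0 = 0}"
    unfolding bij_betw_def
  proof (intro conjI)
    show "inj_on (\<lambda>\<xi> g. \<xi> (0, g)) (B1 d :: ('g \<times> 'g \<Rightarrow> real) set)"
    proof (rule inj_onI)
      fix x y :: "'g \<times> 'g \<Rightarrow> real"
      assume x: "x \<in> B1 d" and y: "y \<in> B1 d" and e: "(\<lambda>g. x (0, g)) = (\<lambda>g. y (0, g))"
      obtain f where f: "x = d0 f" using B1E[OF x] by (elim exE conjE)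
      obtain h where h: "y = d0 h" using B1E[OF y] by (elim exE conjE)
      have "x = d0 (\<lambda>g. x (0, g))" unfolding f by (simp add: d0_def fun_eq_iff split: prod.splits)
      moreover have "y = d0 (\<lambda>g. y (0, g))" unfolding h by (simp add: d0_def fun_eq_iff split: prod.splits)
      ultimately show "x = y" using e by metis
    qed
    show "(\<lambda>\<xi> g. \<xi> (0, g)) ` (B1 d :: ('g \<times> 'g \<Rightarrow> real) set) = {p \<in> Pol (d - 1). p 0 = 0}"
    proof (intro equalityI subsetI)
      fix p assume "p \<in> (\<lambda>\<xi> g. \<xi> (0, g)) ` (B1 d :: ('g \<times> 'g \<Rightarrow> real) set)"
      then obtain z where z: "p = (\<lambda>g. z (0, g))" "z \<in> B1 d" by (rule imageE)
      obtain f where f: "z = d0 f" "f \<in> Pol (d - 1)" using B1E[OF z(2)] by (elim exE conjE)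
      have "p = (\<lambda>x. f x - f 0)" unfolding z(1) f(1) by (simp add: d0_def)
      then show "p \<in> {p \<in> Pol (d - 1). p 0 = 0}"
        using Pol_minus_const[OF f(2), of "f 0"] by simp
    next
      fix p :: "'g \<Rightarrow> real" assume p: "p \<in> {p \<in> Pol (d - 1). p 0 = 0}"
      hence "d0 p \<in> B1 d" by (intro B1I) simp
      moreover have "p = (\<lambda>g. d0 p (0, g))" using p by (simp add: d0_def)
      ultimately show "p \<in> (\<lambda>\<xi> g. \<xi> (0, g)) ` (B1 d :: ('g \<times> 'g \<Rightarrow> real) set)" by (rule rev_image_eqI[where f="\<lambda>\<xi> g. \<xi> (0, g)"])
    qed
  qed
  show "quotient_iso (Z1 d :: ('g \<times> 'g \<Rightarrow> real) set) (B1 d) (Pol d :: ('g \<Rightarrow> real) set) (Pol (d - 1))"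
    unfolding quotient_iso_def
  proof (rule exI[of _ "\<lambda>z g. z (0, g)"], intro conjI ballI allI)
    fix z :: "'g \<times> 'g \<Rightarrow> real" assume "z \<in> Z1 d"
    then show "(\<lambda>g. z (0, g)) \<in> Pol d" by (rule Z1_Pol)
  next
    fix z z' :: "'g \<times> 'g \<Rightarrow> real" and a b :: real
    show "(\<lambda>g. (\<lambda>x. a * z x + b * z' x) (0, g)) = (\<lambda>y. a * z (0, y) + b * z' (0, y))" by simp
  next
    fix p :: "'g \<Rightarrow> real" assume p: "p \<in> Pol d"
    have Z: "d0 p \<in> Z1 d" using p by (rule Pol_Z1)
    have "p - (\<lambda>g. d0 p (0, g)) = (\<lambda>_. p 0)" by (simp add: d0_def fun_eq_iff)
    hence "p - (\<lambda>g. d0 p (0, g)) \<in> Pol (d - 1)" using Pol_const[of "p 0" "d - 1"] by simp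
    with Z show "\<exists>z\<in>Z1 d. p - (\<lambda>g. z (0, g)) \<in> Pol (d - 1)" by (intro bexI[where x="d0 p"])
  next
    fix z :: "'g \<times> 'g \<Rightarrow> real" assume z: "z \<in> Z1 d"
    show "((\<lambda>g. z (0, g)) \<in> Pol (d - 1)) = (z \<in> B1 d)"
    proof
      assume "(\<lambda>g. z (0, g)) \<in> Pol (d - 1)"
      then have B: "d0 (\<lambda>g. z (0, g)) \<in> B1 d" by (rule B1I)
      have E: "z = d0 (\<lambda>g. z (0, g))" by (rule Z1_d0[OF z])
      show "z \<in> B1 d" by (subst E) (rule B)
    next
      assume "z \<in> B1 d"
      then obtain f where f: "z = d0 f" "f \<in> Pol (d - 1)" using B1E by blast
      then have "(\<lambda>g. z (0, g)) = (\<lambda>x. f x - f 0)" by (simp add: d0_def)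
      then show "(\<lambda>g. z (0, g)) \<in> Pol (d - 1)" using Pol_minus_const[OF f(2), of "f 0"] by simp
    qed
  qed
  show "\<forall>g::'g. \<forall>f \<in> Z1 d. act2 g f - f \<in> B1 d"
  proof (intro allI ballI)
    fix g :: 'g and f :: "'g \<times> 'g \<Rightarrow> real" assume z: "f \<in> Z1 d"
    let ?\<psi> = "\<lambda>g. f (0, g)"
    have p: "?\<psi> \<in> Pol d" using z by (rule Z1_Pol)
    have ed: "f = d0 ?\<psi>" by (rule Z1_d0[OF z])
    have "act2 g f - f = act2 g (d0 ?\<psi>) - d0 ?\<psi>" using arg_cong[OF ed, of "\<lambda>h. act2 g h - h"] .
    also have "\<dots> = d0 (act1 g ?\<psi> - ?\<psi>)" by (simp only: act2_d0 d0_diff)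
    finally have e: "act2 g f - f = d0 (act1 g ?\<psi> - ?\<psi>)" .
    have cadd: "continuous_on UNIV (\<lambda>p::'g \<times> 'g. fst p + snd p)"
      using assms(1) by (simp add: topological_group_def)
    have ct: "continuous_on UNIV (\<lambda>h::'g. - g + h)"
    proof -
      have cp: "continuous_on UNIV (\<lambda>h::'g. (- g, h))"
        by (intro continuous_on_Pair continuous_on_const continuous_on_id)
      show ?thesis using continuous_on_compose2[OF cadd cp] by simp
    qed
    have c1: "?\<psi> \<in> C1" using p by (simp add: Pol_def poly_part_def)
    hence cpsi: "continuous_on UNIV ?\<psi>" by (simp add: C1_def)
    have "act1 g ?\<psi> \<in> C1" unfolding C1_def act1_def
      using continuous_on_compose2[OF cpsi ct] by simp
    hence CC: "act1 g ?\<psi> - ?\<psi> \<in> C1" using c1 by (rule C1_diff)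
    have A: "\<forall>gs. length gs = Suc d \<longrightarrow> iter_diff act1 gs ?\<psi> = (\<lambda>_. 0)"
      using p by (simp add: Pol_def poly_part_def)
    have II: "\<forall>gs. length gs = d \<longrightarrow> iter_diff act1 gs (act1 g ?\<psi> - ?\<psi>) = (\<lambda>_. 0)"
    proof (intro allI impI)
      fix gs :: "'g list" assume that: "length gs = d"
      have "length (gs @ [g]) = Suc d" using that by simp
      then have "iter_diff act1 (gs @ [g]) ?\<psi> = (\<lambda>_. 0)" using A by simp
      then show "iter_diff act1 gs (act1 g ?\<psi> - ?\<psi>) = (\<lambda>_. 0)" by (simp only: iter_diff_snoc)
    qed
    have "act1 g ?\<psi> - ?\<psi> \<in> poly_part act1 d C1" unfolding poly_part_def using CC II by simp
    then show "act2 g f - f \<in> B1 d" unfolding e B1_def by (rule imageI)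
  qed
qed

end
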